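(* Let $a\in C^\infty(\mathbb{R}^{2d}\times\mathbb{R}^d)$, $a=a(x,y,\xi)$, be real with $\partial_{y_j}a\in S^1(\mathbb{R}^{2d}\times\mathbb{R}^d)$ for $1\le j\le d$, and suppose there is $\delta\in[0,1)$ with $\|(\nabla^2_{\xi,y}a)(x,y,\xi)\|\le\delta$ for all $(x,y,\xi)$. Let $\Lambda(x,y,\xi):=\xi+(\nabla_ya)(x,y,\xi)$. Then: (1) $\Lambda\in S^1(\mathbb{R}^{2d}\times\mathbb{R}^d)$ and for each $(x,y)$ the map $\xi\mapsto\Lambda(x,y,\xi)$ is a $C^\infty$-diffeomorphism of $\mathbb{R}^d$; let $\eta\mapsto\lambda(x,y,\eta)$ be its inverse; (2) there is $C>0$ with $C^{-1}\langle\xi\rangle\le\langle\Lambda(x,y,\xi)\rangle\le C\langle\xi\rangle$ and $C^{-1}\langle\eta\rangle\le\langle\lambda(x,y,\eta)\rangle\le C\langle\eta\rangle$ for all $x,y,\xi,\eta$; (3) the components of $\lambda$ belong to $S^1(\mathbb{R}^{2d}\times\mathbb{R}^d)$; (4) the Jacobian determinant $D(x,y,\eta)$ of $\eta\mapsto\lambda(x,y,\eta)$ belongs to $S^0(\mathbb{R}^{2d}\times\mathbb{R}^d)$.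
   Context: $\langle\xi\rangle=(1+|\xi|^2)^{1/2}$. $S^m(\mathbb{R}^{2d}\times\mathbb{R}^d)$ is the space of $f\in C^\infty(\mathbb{R}^{2d}\times\mathbb{R}^d)$, $f=f(u,\xi)$ with $u=(x,y)\in\mathbb{R}^{2d}$, $\xi\in\mathbb{R}^d$, such that $|\partial_u^\alpha\partial_\xi^\beta f(u,\xi)|\le C_{\alpha\beta}\langle\xi\rangle^{m-|\beta|}$ for all multi-indices. $\nabla^2_{\xi,y}a$ is the $d\times d$ matrix $(\partial_{\xi_j}\partial_{y_k}a)$ and $\|\cdot\|$ the operator norm. *)

theory Defs
  imports "HOL-Analysis.Analysis"
begin

text \<open>Points of R^{2d} x R^d are represented as ((x,y),xi) with x,y,xi :: real^'n,
  d = CARD('n).\<close>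
type_synonym 'n pt = "((real^'n) \<times> (real^'n)) \<times> (real^'n)"

definition dpart :: "'a::euclidean_space \<Rightarrow> ('a \<Rightarrow> real) \<Rightarrow> 'a \<Rightarrow> real" where
  "dpart v f p = deriv (\<lambda>t. f (p + t *\<^sub>R v)) 0"

fun iter_part :: "'a::euclidean_space list \<Rightarrow> ('a \<Rightarrow> real) \<Rightarrow> 'a \<Rightarrow> real" where
  "iter_part [] f = f"
| "iter_part (v # vs) f = dpart v (iter_part vs f)"

definition smooth_fun :: "('a::euclidean_space \<Rightarrow> real) \<Rightarrow> bool" where
  "smooth_fun f \<longleftrightarrow> (\<forall>vs. set vs \<subseteq> Basis \<longrightarrow> (\<forall>p. iter_part vs f differentiable (at p)))"

definition smooth_map :: "(real^'n::finite \<Rightarrow> real^'n) \<Rightarrow> bool" where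
  "smooth_map g \<longleftrightarrow> (\<forall>k. smooth_fun (\<lambda>v. g v $ k))"

definition smooth_diffeo :: "(real^'n::finite \<Rightarrow> real^'n) \<Rightarrow> bool" where
  "smooth_diffeo g \<longleftrightarrow> bij g \<and> smooth_map g \<and> smooth_map (inv g)"

definition jbr :: "real^'n::finite \<Rightarrow> real" where
  "jbr v = sqrt (1 + (norm v)\<^sup>2)"

text \<open>The xi-directions are the basis vectors ((0,0),e).\<close>
definition symb :: "real \<Rightarrow> (('n::finite) pt \<Rightarrow> real) \<Rightarrow> bool" where
  "symb m f \<longleftrightarrow> smooth_fun f \<and>
     (\<forall>vs. set vs \<subseteq> Basis \<longrightarrow>
        (\<exists>C. \<forall>p. \<bar>iter_part vs f p\<bar> \<le>
                 C * jbr (snd p) powr (m - real (length (filter (\<lambda>v. fst v = 0) vs)))))"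

definition dy :: "'n::finite \<Rightarrow> (('n::finite) pt \<Rightarrow> real) \<Rightarrow> 'n pt \<Rightarrow> real" where
  "dy k f = dpart ((0, axis k 1), 0) f"

definition dxi :: "'n::finite \<Rightarrow> (('n::finite) pt \<Rightarrow> real) \<Rightarrow> 'n pt \<Rightarrow> real" where
  "dxi j f = dpart ((0, 0), axis j 1) f"

definition hess_xi_y :: "(('n::finite) pt \<Rightarrow> real) \<Rightarrow> 'n pt \<Rightarrow> real^'n^'n" where
  "hess_xi_y a p = (\<chi> j k. dxi j (dy k a) p)"

definition Lam :: "(('n::finite) pt \<Rightarrow> real) \<Rightarrow> 'n pt \<Rightarrow> real^'n" where
  "Lam a p = snd p + (\<chi> k. dy k a p)"

definition lam :: "(('n::finite) pt \<Rightarrow> real) \<Rightarrow> 'n pt \<Rightarrow> real^'n" where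
  "lam a p = inv (\<lambda>xi. Lam a (fst p, xi)) (snd p)"

definition jac_lam :: "(('n::finite) pt \<Rightarrow> real) \<Rightarrow> 'n pt \<Rightarrow> real" where
  "jac_lam a p = det (\<chi> i j. dxi j (\<lambda>q. lam a q $ i) p)"

end

theory Submission
  imports Defs
begin


lemma dpart_has_derivative:
  assumes "(f has_derivative f') (at p)"
  shows "dpart v f p = f' v"
proof -
  have l: "((\<lambda>t::real. p + t *\<^sub>R v) has_derivative (\<lambda>t. t *\<^sub>R v)) (at 0)"
    by (auto intro!: derivative_eq_intros)
  have "((\<lambda>t. f (p + t *\<^sub>R v)) has_derivative (\<lambda>t. f' (t *\<^sub>R v))) (at 0)"
    using has_derivative_compose[OF l] assms by simp
  moreover have "(\<lambda>t. f' (t *\<^sub>R v)) = (*) (f' v)"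
    using assms has_derivative_linear linear_scale by (fastforce simp: mult.commute)
  ultimately have "((\<lambda>t. f (p + t *\<^sub>R v)) has_field_derivative f' v) (at 0)"
    by (simp add: has_field_derivative_def)
  then show ?thesis unfolding dpart_def by (rule DERIV_imp_deriv)
qed

lemma dpart_diff: "f differentiable (at p) \<Longrightarrow> dpart v f p = frechet_derivative f (at p) v"
  by (simp add: dpart_has_derivative frechet_derivative_works)

lemma iter_part_snoc: "iter_part (vs @ [v]) f = iter_part vs (dpart v f)"
  by (induction vs) auto

definition iota :: "('n::finite) pt \<Rightarrow> real" where "iota b = (if fst b = 0 then 1 else 0)"

lemma len_filter_snoc: "real (length (filter (\<lambda>v. fst v = 0) (vs @ [b]))) =
   real (length (filter (\<lambda>v. fst v = 0) vs)) + iota b"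
  by (simp add: iota_def)

lemma symb_coinduct:
  fixes f :: "('n::finite) pt \<Rightarrow> real"
  assumes "P m f"
    and step: "\<And>m f. P m f \<Longrightarrow> (\<forall>p. f differentiable (at p)) \<and>
        (\<exists>C. \<forall>p. \<bar>f p\<bar> \<le> C * jbr (snd p) powr m) \<and> (\<forall>b\<in>Basis. P (m - iota b) (dpart b f))"
  shows "symb m f"
proof -
  have main: "\<forall>m f. P m f \<longrightarrow> (\<forall>p. iter_part vs f differentiable (at p)) \<and>
        (\<exists>C. \<forall>p. \<bar>iter_part vs f p\<bar> \<le> C * jbr (snd p) powr (m - real (length (filter (\<lambda>v. fst v = 0) vs))))"
    if "set vs \<subseteq> Basis" for vs :: "'n pt list"
    using that
  proof (induction vs rule: rev_induct)
    case Nil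
    then show ?case using step by simp
  next
    case (snoc b vs)
    show ?case
    proof (intro allI impI)
      fix m f assume Pf: "P m f"
      have "b \<in> Basis" using snoc.prems by auto
      then have "P (m - iota b) (dpart b f)" using step[OF Pf] by blast
      then have "(\<forall>p. iter_part vs (dpart b f) differentiable (at p)) \<and>
        (\<exists>C. \<forall>p. \<bar>iter_part vs (dpart b f) p\<bar> \<le> C * jbr (snd p) powr (m - iota b - real (length (filter (\<lambda>v. fst v = 0) vs))))"
        using snoc by auto
      then show "(\<forall>p. iter_part (vs @ [b]) f differentiable (at p)) \<and>
        (\<exists>C. \<forall>p. \<bar>iter_part (vs @ [b]) f p\<bar> \<le> C * jbr (snd p) powr (m - real (length (filter (\<lambda>v. fst v = 0) (vs @ [b])))))"
        unfolding iter_part_snoc len_filter_snoc by (simp add: algebra_simps)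
    qed
  qed
  show ?thesis unfolding symb_def smooth_fun_def
  proof (intro conjI allI impI)
    fix vs :: "'n pt list" and p assume "set vs \<subseteq> Basis"
    from main[OF this, rule_format, OF assms(1)] show "iter_part vs f differentiable (at p)" by (elim conjE allE)
  next
    fix vs :: "'n pt list" assume "set vs \<subseteq> Basis"
    from main[OF this, rule_format, OF assms(1)] show "\<exists>C. \<forall>p. \<bar>iter_part vs f p\<bar> \<le> C * jbr (snd p) powr (m - real (length (filter (\<lambda>v. fst v = 0) vs)))"
      by (rule conjunct2)
  qed
qed

lemma symb_D:
  fixes f :: "('n::finite) pt \<Rightarrow> real"
  assumes "symb m f"
  shows "(\<forall>p. f differentiable (at p)) \<and> (\<exists>C. \<forall>p. \<bar>f p\<bar> \<le> C * jbr (snd p) powr m)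
     \<and> (\<forall>b\<in>Basis. symb (m - iota b) (dpart b f))"
proof -
  have A: "\<And>vs p. set vs \<subseteq> Basis \<Longrightarrow> iter_part vs f differentiable (at p)"
    using assms unfolding symb_def smooth_fun_def by blast
  have B: "\<And>vs. set vs \<subseteq> Basis \<Longrightarrow> (\<exists>C. \<forall>p. \<bar>iter_part vs f p\<bar> \<le>
                 C * jbr (snd p) powr (m - real (length (filter (\<lambda>v. fst v = 0) vs))))"
    using assms unfolding symb_def by blast
  have d: "\<forall>p. f differentiable (at p)" using A[of "[]"] by simp
  have c: "\<exists>C. \<forall>p. \<bar>f p\<bar> \<le> C * jbr (snd p) powr m" using B[of "[]"] by simp
  have "symb (m - iota b) (dpart b f)" if b: "b \<in> Basis" for b
    unfolding symb_def smooth_fun_def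
  proof (intro conjI allI impI)
    fix vs :: "'n pt list" and p assume "set vs \<subseteq> Basis"
    then have "set (vs @ [b]) \<subseteq> Basis" using b by auto
    from A[OF this, of p] show "iter_part vs (dpart b f) differentiable at p"
      unfolding iter_part_snoc .
  next
    fix vs :: "'n pt list" assume "set vs \<subseteq> Basis"
    then have "set (vs @ [b]) \<subseteq> Basis" using b by auto
    from B[OF this] have "\<exists>C. \<forall>p. \<bar>iter_part vs (dpart b f) p\<bar> \<le> C * jbr (snd p) powr (m - (real (length (filter (\<lambda>v. fst v = 0) vs)) + iota b))"
      unfolding iter_part_snoc len_filter_snoc .
    then show "\<exists>C. \<forall>p. \<bar>iter_part vs (dpart b f) p\<bar> \<le> C * jbr (snd p) powr (m - iota b - real (length (filter (\<lambda>v. fst v = 0) vs)))"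
      by (simp add: algebra_simps)
  qed
  then show ?thesis using d c by blast
qed

lemma symb_I:
  fixes f :: "('n::finite) pt \<Rightarrow> real"
  assumes "\<forall>p. f differentiable (at p)" "\<exists>C. \<forall>p. \<bar>f p\<bar> \<le> C * jbr (snd p) powr m"
     "\<forall>b\<in>Basis. symb (m - iota b) (dpart b f)"
  shows "symb m f"
proof -
  let ?P = "\<lambda>m f. symb m f \<or> ((\<forall>p. f differentiable (at p)) \<and> (\<exists>C. \<forall>p. \<bar>f p\<bar> \<le> C * jbr (snd p) powr m)
     \<and> (\<forall>b\<in>Basis. symb (m - iota b) (dpart b f)))"
  show ?thesis
  proof (rule symb_coinduct[of ?P])
    show "?P m f" using assms by blast
  next
    fix m f assume h: "?P m f"
    show "(\<forall>p. f differentiable (at p)) \<and> (\<exists>C. \<forall>p. \<bar>f p\<bar> \<le> C * jbr (snd p) powr m) \<and> (\<forall>b\<in>Basis. ?P (m - iota b) (dpart b f))"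
    proof (cases "symb m f")
      case True
      from symb_D[OF True] show ?thesis by blast
    next
      case False
      with h show ?thesis by blast
    qed
  qed
qed

lemma jbr_ge1: "1 \<le> jbr v"
  unfolding jbr_def by simp

lemma jbr_pos: "0 < jbr v"
  using jbr_ge1[of v] by linarith

lemma norm_le_jbr: "norm v \<le> jbr v"
  unfolding jbr_def by (simp add: real_le_rsqrt)

lemma jbr_le: "jbr v \<le> 1 + norm v"
  unfolding jbr_def by (rule real_le_lsqrt) (auto simp: power2_eq_square algebra_simps)

lemma jbr_powr_mono: "m \<le> m' \<Longrightarrow> jbr v powr m \<le> jbr v powr m'"
  by (rule powr_mono) (auto simp: jbr_ge1)

lemma symb_mono:
  fixes f :: "('n::finite) pt \<Rightarrow> real"
  assumes "symb m0 f" "m0 \<le> m"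
  shows "symb m f"
proof -
  let ?P = "\<lambda>m f. \<exists>m0. m0 \<le> m \<and> symb m0 f"
  show ?thesis
  proof (rule symb_coinduct[of ?P])
    show "?P m f" using assms by blast
  next
    fix m and f :: "'n pt \<Rightarrow> real" assume "?P m f"
    then obtain m0 where m0: "m0 \<le> m" "symb m0 f" by blast
    note D = symb_D[OF m0(2)]
    obtain C where C: "\<forall>p. \<bar>f p\<bar> \<le> C * jbr (snd p) powr m0" using D by blast
    have "\<bar>f p\<bar> \<le> \<bar>C\<bar> * jbr (snd p) powr m" for p
    proof -
      have "\<bar>f p\<bar> \<le> C * jbr (snd p) powr m0" using C by blast
      also have "\<dots> \<le> \<bar>C\<bar> * jbr (snd p) powr m0" by (simp add: mult_right_mono)
      also have "\<dots> \<le> \<bar>C\<bar> * jbr (snd p) powr m" by (simp add: jbr_powr_mono m0(1) mult_left_mono)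
      finally show ?thesis .
    qed
    moreover have "\<forall>b\<in>Basis. ?P (m - iota b) (dpart b f)"
    proof
      fix b :: "'n pt" assume "b \<in> Basis"
      then have "symb (m0 - iota b) (dpart b f)" using D by blast
      moreover have "m0 - iota b \<le> m - iota b" using m0(1) by simp
      ultimately show "?P (m - iota b) (dpart b f)" by blast
    qed
    ultimately show "(\<forall>p. f differentiable (at p)) \<and> (\<exists>C. \<forall>p. \<bar>f p\<bar> \<le> C * jbr (snd p) powr m) \<and> (\<forall>b\<in>Basis. ?P (m - iota b) (dpart b f))"
      using D by (intro conjI exI[of _ "\<bar>C\<bar>"]) auto
  qed
qed

lemma dpart_const: "dpart v (\<lambda>q. c) = (\<lambda>q. (0::real))"
  by (rule ext, subst dpart_has_derivative[of _ "\<lambda>_. 0"]) (auto intro: derivative_eq_intros)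

lemma symb_const0: "symb m (\<lambda>p. 0)"
proof -
  let ?P = "\<lambda>m f. f = (\<lambda>p. 0::real)"
  show ?thesis by (rule symb_coinduct[of ?P]) (auto simp: dpart_const intro: exI[of _ 0])
qed

lemma symb_const:
  fixes c :: real assumes m: "0 \<le> m" shows "symb m (\<lambda>p::('n::finite) pt. c)"
proof (rule symb_I)
  show "\<exists>C. \<forall>p::'n pt. \<bar>c\<bar> \<le> C * jbr (snd p) powr m"
  proof (intro exI allI)
    fix p :: "'n pt"
    have "1 \<le> jbr (snd p) powr m" by (rule ge_one_powr_ge_zero[OF jbr_ge1 m])
    then show "\<bar>c\<bar> \<le> \<bar>c\<bar> * jbr (snd p) powr m" by (simp add: mult_le_cancel_left1)
  qed
qed (auto simp: dpart_const symb_const0)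

lemma dpart_add:
  assumes "f differentiable (at p)" "g differentiable (at p)"
  shows "dpart v (\<lambda>q. f q + g q) p = dpart v f p + dpart v g p"
proof -
  obtain f' g' where "(f has_derivative f') (at p)" "(g has_derivative g') (at p)"
    using assms unfolding differentiable_def by blast
  then have fd: "(f has_derivative f') (at p)" and gd: "(g has_derivative g') (at p)" by auto
  have "((\<lambda>q. f q + g q) has_derivative (\<lambda>h. f' h + g' h)) (at p)"
    by (rule has_derivative_add) (fact fd, fact gd)
  note hd = this
  show ?thesis
    using dpart_has_derivative[OF hd] dpart_has_derivative[OF fd] dpart_has_derivative[OF gd] by simp
qed

lemma dpart_mult:
  assumes "f differentiable (at p)" "g differentiable (at p)"
  shows "dpart v (\<lambda>q. f q * g q) p = dpart v f p * g p + f p * dpart v g p"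
proof -
  obtain f' g' where fd: "(f has_derivative f') (at p)" and gd: "(g has_derivative g') (at p)"
    using assms unfolding differentiable_def by blast
  have "((\<lambda>q. f q * g q) has_derivative (\<lambda>h. f p * g' h + f' h * g p)) (at p)"
    using has_derivative_mult[OF fd gd] by simp
  note hd = this
  show ?thesis
    using dpart_has_derivative[OF hd] dpart_has_derivative[OF fd] dpart_has_derivative[OF gd] by simp
qed

lemma dpart_scale:
  assumes "f differentiable (at p)"
  shows "dpart v (\<lambda>q. c * f q) p = c * dpart v f p"
  using dpart_mult[OF differentiable_const assms, of v] by (simp add: dpart_const)

lemma symb_add:
  fixes f :: "('n::finite) pt \<Rightarrow> real"
  assumes "symb m f" "symb m g" shows "symb m (\<lambda>p. f p + g p)"
proof -
  let ?P = "\<lambda>m h. \<exists>f g. symb m f \<and> symb m g \<and> h = (\<lambda>p. f p + g p)"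
  show ?thesis
  proof (rule symb_coinduct[of ?P])
    show "?P m (\<lambda>p. f p + g p)" using assms by blast
  next
    fix m and h :: "'n pt \<Rightarrow> real" assume "?P m h"
    then obtain f g where fg: "symb m f" "symb m g" "h = (\<lambda>p. f p + g p)" by blast
    note Df = symb_D[OF fg(1)] and Dg = symb_D[OF fg(2)]
    obtain C1 C2 where C1: "\<forall>p. \<bar>f p\<bar> \<le> C1 * jbr (snd p) powr m" and C2: "\<forall>p. \<bar>g p\<bar> \<le> C2 * jbr (snd p) powr m"
      using Df Dg by blast
    have "\<bar>h p\<bar> \<le> (C1 + C2) * jbr (snd p) powr m" for p
      using C1[rule_format, of p] C2[rule_format, of p] unfolding fg(3) by (simp add: algebra_simps)
    moreover have "\<forall>p. h differentiable (at p)" using Df Dg fg(3) by auto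
    moreover have "\<forall>b\<in>Basis. ?P (m - iota b) (dpart b h)"
    proof
      fix b :: "'n pt" assume b: "b \<in> Basis"
      have "dpart b h = (\<lambda>p. dpart b f p + dpart b g p)"
        unfolding fg(3) by (rule ext, rule dpart_add) (use Df Dg in auto)
      moreover have "symb (m - iota b) (dpart b f)" using Df b by blast
      moreover have "symb (m - iota b) (dpart b g)" using Dg b by blast
      ultimately show "?P (m - iota b) (dpart b h)" by blast
    qed
    ultimately show "(\<forall>p. h differentiable (at p)) \<and> (\<exists>C. \<forall>p. \<bar>h p\<bar> \<le> C * jbr (snd p) powr m) \<and> (\<forall>b\<in>Basis. ?P (m - iota b) (dpart b h))"
      by (intro conjI exI[of _ "C1 + C2"]) auto
  qed
qed



definition sp :: "(real \<times> ('a \<Rightarrow> real) \<times> ('a \<Rightarrow> real)) list \<Rightarrow> 'a \<Rightarrow> real" where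
  "sp L p = sum_list (map (\<lambda>x. fst (snd x) p * snd (snd x) p) L)"

lemma sp_Nil[simp]: "sp [] p = 0" by (simp add: sp_def)
lemma sp_Cons[simp]: "sp (x # L) p = fst (snd x) p * snd (snd x) p + sp L p" by (simp add: sp_def)
lemma sp_append[simp]: "sp (L1 @ L2) p = sp L1 p + sp L2 p" by (simp add: sp_def)

definition Dsp :: "'a::euclidean_space \<Rightarrow> real \<Rightarrow> (real \<times> ('a \<Rightarrow> real) \<times> ('a \<Rightarrow> real)) list \<Rightarrow> (real \<times> ('a \<Rightarrow> real) \<times> ('a \<Rightarrow> real)) list" where
  "Dsp b i L = concat (map (\<lambda>x. [(fst x - i, dpart b (fst (snd x)), snd (snd x)), (fst x, fst (snd x), dpart b (snd (snd x)))]) L)"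

lemma Dsp_Nil[simp]: "Dsp b i [] = []" by (simp add: Dsp_def)
lemma Dsp_Cons[simp]: "Dsp b i (x # L) = [(fst x - i, dpart b (fst (snd x)), snd (snd x)), (fst x, fst (snd x), dpart b (snd (snd x)))] @ Dsp b i L"
  by (simp add: Dsp_def)

lemma sp_differentiable:
  assumes "\<forall>x\<in>set L. (\<forall>p. fst (snd x) differentiable (at p)) \<and> (\<forall>p. snd (snd x) differentiable (at p))"
  shows "sp L differentiable (at p)"
  using assms
proof (induction L)
  case Nil
  then show ?case by (simp add: sp_def)
next
  case (Cons x L)
  have e: "sp (x # L) = (\<lambda>p. fst (snd x) p * snd (snd x) p + sp L p)" by (rule ext) simp
  show ?case unfolding e using Cons by (auto intro!: differentiable_add differentiable_mult)
qed

lemma sp_dpart: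
  assumes "\<forall>x\<in>set L. (\<forall>p. fst (snd x) differentiable (at p)) \<and> (\<forall>p. snd (snd x) differentiable (at p))"
  shows "dpart b (sp L) p = sp (Dsp b i L) p"
  using assms
proof (induction L)
  case Nil
  then show ?case by (simp add: sp_def dpart_const)
next
  case (Cons x L)
  have e: "sp (x # L) = (\<lambda>p. fst (snd x) p * snd (snd x) p + sp L p)" by (rule ext) simp
  have d1: "(\<lambda>p. fst (snd x) p * snd (snd x) p) differentiable (at p)"
    using Cons.prems by (auto intro!: differentiable_mult)
  have d2: "sp L differentiable (at p)" using Cons.prems sp_differentiable by auto
  show ?case unfolding e
    using dpart_add[OF d1 d2, of b] dpart_mult[of "fst (snd x)" p "snd (snd x)" b] Cons by auto
qed

lemma sp_bound:
  fixes L :: "(real \<times> (('n::finite) pt \<Rightarrow> real) \<times> ('n pt \<Rightarrow> real)) list"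
  assumes "\<forall>x\<in>set L. symb (fst x) (fst (snd x)) \<and> symb (m - fst x) (snd (snd x))"
  shows "\<exists>C. \<forall>p. \<bar>sp L p\<bar> \<le> C * jbr (snd p) powr m"
  using assms
proof (induction L)
  case Nil
  then show ?case by (auto intro: exI[of _ 0])
next
  case (Cons x L)
  obtain C0 where C0: "\<forall>p. \<bar>sp L p\<bar> \<le> C0 * jbr (snd p) powr m" using Cons by auto
  obtain C1 where C1: "\<forall>p. \<bar>fst (snd x) p\<bar> \<le> C1 * jbr (snd p) powr (fst x)"
    using Cons.prems symb_D by (metis list.set_intros(1))
  obtain C2 where C2: "\<forall>p. \<bar>snd (snd x) p\<bar> \<le> C2 * jbr (snd p) powr (m - fst x)"
    using Cons.prems symb_D by (metis list.set_intros(1))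
  have "\<bar>sp (x # L) p\<bar> \<le> (\<bar>C1\<bar> * \<bar>C2\<bar> + C0) * jbr (snd p) powr m" for p
  proof -
    have a: "\<bar>fst (snd x) p\<bar> \<le> \<bar>C1\<bar> * jbr (snd p) powr (fst x)"
      using C1[rule_format, of p] by (smt (verit) mult_right_mono powr_ge_zero)
    have b: "\<bar>snd (snd x) p\<bar> \<le> \<bar>C2\<bar> * jbr (snd p) powr (m - fst x)"
      using C2[rule_format, of p] by (smt (verit) mult_right_mono powr_ge_zero)
    have "\<bar>fst (snd x) p * snd (snd x) p\<bar> \<le> (\<bar>C1\<bar> * jbr (snd p) powr (fst x)) * (\<bar>C2\<bar> * jbr (snd p) powr (m - fst x))"
      unfolding abs_mult by (rule mult_mono[OF a b]) auto
    also have "\<dots> = \<bar>C1\<bar> * \<bar>C2\<bar> * jbr (snd p) powr m"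
      by (simp add: powr_add[symmetric])
    finally have "\<bar>fst (snd x) p * snd (snd x) p\<bar> \<le> \<bar>C1\<bar> * \<bar>C2\<bar> * jbr (snd p) powr m" .
    then show ?thesis using C0[rule_format, of p] by (simp add: algebra_simps)
  qed
  then show ?case by blast
qed

lemma symb_sp:
  fixes L :: "(real \<times> (('n::finite) pt \<Rightarrow> real) \<times> ('n pt \<Rightarrow> real)) list"
  assumes "\<forall>x\<in>set L. symb (fst x) (fst (snd x)) \<and> symb (m - fst x) (snd (snd x))"
  shows "symb m (sp L)"
proof -
  let ?P = "\<lambda>m h. \<exists>L::(real \<times> ('n pt \<Rightarrow> real) \<times> ('n pt \<Rightarrow> real)) list.
      (\<forall>x\<in>set L. symb (fst x) (fst (snd x)) \<and> symb (m - fst x) (snd (snd x))) \<and> h = sp L"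
  show ?thesis
  proof (rule symb_coinduct[of ?P])
    show "?P m (sp L)" using assms by blast
  next
    fix m and h :: "'n pt \<Rightarrow> real" assume "?P m h"
    then obtain L :: "(real \<times> ('n pt \<Rightarrow> real) \<times> ('n pt \<Rightarrow> real)) list" where
      L: "\<forall>x\<in>set L. symb (fst x) (fst (snd x)) \<and> symb (m - fst x) (snd (snd x))" and h: "h = sp L"
      by blast
    have dL: "\<forall>x\<in>set L. (\<forall>p. fst (snd x) differentiable (at p)) \<and> (\<forall>p. snd (snd x) differentiable (at p))"
      using L symb_D by blast
    have "\<forall>p. h differentiable (at p)" unfolding h using sp_differentiable[OF dL] by blast
    moreover have "\<exists>C. \<forall>p. \<bar>h p\<bar> \<le> C * jbr (snd p) powr m" unfolding h by (rule sp_bound[OF L])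
    moreover have "\<forall>b\<in>Basis. ?P (m - iota b) (dpart b h)"
    proof
      fix b :: "'n pt" assume b: "b \<in> Basis"
      have "dpart b h = sp (Dsp b (iota b) L)" unfolding h
        by (rule ext) (rule sp_dpart[OF dL])
      moreover have "\<forall>x\<in>set (Dsp b (iota b) L). symb (fst x) (fst (snd x)) \<and> symb (m - iota b - fst x) (snd (snd x))"
      proof
        fix y assume "y \<in> set (Dsp b (iota b) L)"
        then obtain x where x: "x \<in> set L" and y: "y = (fst x - iota b, dpart b (fst (snd x)), snd (snd x)) \<or>
            y = (fst x, fst (snd x), dpart b (snd (snd x)))"
          unfolding Dsp_def by auto
        have s1: "symb (fst x) (fst (snd x))" and s2: "symb (m - fst x) (snd (snd x))" using L x by auto
        have s3: "symb (fst x - iota b) (dpart b (fst (snd x)))" using symb_D[OF s1] b by blast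
        have s4: "symb (m - fst x - iota b) (dpart b (snd (snd x)))" using symb_D[OF s2] b by blast
        have e1: "m - iota b - (fst x - iota b) = m - fst x" by simp
        have e2: "m - iota b - fst x = m - fst x - iota b" by simp
        have s3': "symb (m - iota b - (fst x - iota b)) (snd (snd x))" unfolding e1 by (rule s2)
        have s4': "symb (m - iota b - fst x) (dpart b (snd (snd x)))" unfolding e2 by (rule s4)
        show "symb (fst y) (fst (snd y)) \<and> symb (m - iota b - fst y) (snd (snd y))"
          using y s1 s3 s3' s4' by auto
      qed
      ultimately show "?P (m - iota b) (dpart b h)" by blast
    qed
    ultimately show "(\<forall>p. h differentiable (at p)) \<and> (\<exists>C. \<forall>p. \<bar>h p\<bar> \<le> C * jbr (snd p) powr m) \<and> (\<forall>b\<in>Basis. ?P (m - iota b) (dpart b h))"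
      by blast
  qed
qed

lemma symb_mult:
  fixes f :: "('n::finite) pt \<Rightarrow> real"
  assumes "symb m1 f" "symb m2 g"
  shows "symb (m1 + m2) (\<lambda>p. f p * g p)"
proof -
  have "symb (m1 + m2) (sp [(m1, f, g)])" by (rule symb_sp) (use assms in auto)
  moreover have "sp [(m1, f, g)] = (\<lambda>p. f p * g p)" by (rule ext) simp
  ultimately show ?thesis by simp
qed

lemma symb_mult':
  fixes f :: "('n::finite) pt \<Rightarrow> real"
  assumes "symb m1 f" "symb m2 g" "m = m1 + m2"
  shows "symb m (\<lambda>p. f p * g p)"
  using symb_mult[OF assms(1,2)] assms(3) by simp

lemma symb_scale:
  fixes f :: "('n::finite) pt \<Rightarrow> real"
  assumes "symb m f"
  shows "symb m (\<lambda>p. c * f p)"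
  using symb_mult[OF symb_const[of 0 c] assms] by simp

lemma symb_uminus:
  fixes f :: "('n::finite) pt \<Rightarrow> real"
  assumes "symb m f"
  shows "symb m (\<lambda>p. - f p)"
  using symb_scale[OF assms, of "-1"] by simp

lemma symb_sum:
  fixes F :: "'i \<Rightarrow> ('n::finite) pt \<Rightarrow> real"
  assumes "finite A" "\<And>i. i \<in> A \<Longrightarrow> symb m (F i)"
  shows "symb m (\<lambda>p. \<Sum>i\<in>A. F i p)"
  using assms
proof (induction A rule: finite_induct)
  case empty
  then show ?case by (simp add: symb_const0)
next
  case (insert x F)
  then show ?case by (simp add: symb_add)
qed

lemma symb_prod0:
  fixes F :: "'i \<Rightarrow> ('n::finite) pt \<Rightarrow> real"
  assumes "finite A" "\<And>i. i \<in> A \<Longrightarrow> symb 0 (F i)"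
  shows "symb 0 (\<lambda>p. \<Prod>i\<in>A. F i p)"
  using assms
proof (induction A rule: finite_induct)
  case empty
  then show ?case by (simp add: symb_const)
next
  case (insert x A)
  then show ?case using symb_mult[of 0 "F x" 0] by simp
qed

lemma symb_det:
  fixes M :: "('n::finite) pt \<Rightarrow> real^'k::finite^'k"
  assumes "\<And>i j. symb 0 (\<lambda>p. M p $ i $ j)"
  shows "symb 0 (\<lambda>p. det (M p))"
  unfolding det_def
  by (rule symb_sum) (auto intro!: symb_scale symb_prod0 assms)



lemma dpart_comp_real:
  assumes "(\<phi> has_real_derivative d) (at (g p))" "g differentiable (at p)"
  shows "dpart b (\<lambda>q. \<phi> (g q)) p = d * dpart b g p"
proof -
  obtain g' where gd: "(g has_derivative g') (at p)" using assms(2) unfolding differentiable_def by blast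
  have "(\<phi> has_derivative (*) d) (at (g p))"
    using assms(1) by (simp add: has_field_derivative_def)
  from has_derivative_compose[OF gd this]
  have "((\<lambda>q. \<phi> (g q)) has_derivative (\<lambda>h. d * g' h)) (at p)" by simp
  then show ?thesis using dpart_has_derivative[OF gd] dpart_has_derivative by metis
qed

lemma deriv_inv_pow:
  assumes "x \<noteq> 0"
  shows "((\<lambda>x. inverse x ^ k) has_real_derivative (- real k * inverse x ^ (Suc k))) (at (x::real))"
proof -
  have "((\<lambda>x. inverse x ^ k) has_real_derivative (real k * inverse x ^ (k - 1) * (- inverse (x ^ 2)))) (at x)"
    using assms by (auto intro!: derivative_eq_intros simp: power2_eq_square)
  moreover have "real k * inverse x ^ (k - 1) * (- inverse (x ^ 2)) = - real k * inverse x ^ (Suc k)"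
    using assms by (cases k) (auto simp: power2_eq_square field_simps)
  ultimately show ?thesis by metis
qed

definition spw :: "('a \<Rightarrow> real) \<Rightarrow> (('a \<Rightarrow> real) \<times> nat) list \<Rightarrow> 'a \<Rightarrow> real" where
  "spw g L p = sum_list (map (\<lambda>x. fst x p * inverse (g p) ^ snd x) L)"

lemma spw_Nil[simp]: "spw g [] p = 0" by (simp add: spw_def)
lemma spw_Cons[simp]: "spw g (x # L) p = fst x p * inverse (g p) ^ snd x + spw g L p" by (simp add: spw_def)
lemma spw_append[simp]: "spw g (L1 @ L2) p = spw g L1 p + spw g L2 p" by (simp add: spw_def)

definition Dspw :: "'a::euclidean_space \<Rightarrow> ('a \<Rightarrow> real) \<Rightarrow> (('a \<Rightarrow> real) \<times> nat) list \<Rightarrow> (('a \<Rightarrow> real) \<times> nat) list" where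
  "Dspw b g L = concat (map (\<lambda>x. [(dpart b (fst x), snd x), (\<lambda>q. - real (snd x) * fst x q * dpart b g q, Suc (snd x))]) L)"

lemma Dspw_Nil[simp]: "Dspw b g [] = []" by (simp add: Dspw_def)
lemma Dspw_Cons[simp]: "Dspw b g (x # L) = [(dpart b (fst x), snd x), (\<lambda>q. - real (snd x) * fst x q * dpart b g q, Suc (snd x))] @ Dspw b g L"
  by (simp add: Dspw_def)

lemma invpow_differentiable:
  fixes g :: "'a::real_normed_vector \<Rightarrow> real"
  assumes "g differentiable (at p)" "g p \<noteq> 0"
  shows "(\<lambda>q. inverse (g q) ^ k) differentiable (at p)"
proof -
  obtain g' where gd: "(g has_derivative g') (at p)" using assms(1) unfolding differentiable_def by blast
  have "((\<lambda>x. inverse x ^ k) has_derivative (*) (- real k * inverse (g p) ^ (Suc k))) (at (g p))"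
    using deriv_inv_pow[OF assms(2), of k] by (simp add: has_field_derivative_def)
  from has_derivative_compose[OF gd this] show ?thesis unfolding differentiable_def by blast
qed

lemma spw_differentiable:
  assumes "\<forall>x\<in>set L. (\<forall>p. fst x differentiable (at p))" "\<forall>p. g differentiable (at p)" "\<forall>p. g p \<noteq> 0"
  shows "spw g L differentiable (at p)"
  using assms(1)
proof (induction L)
  case Nil
  then show ?case by (simp add: spw_def)
next
  case (Cons x L)
  have e: "spw g (x # L) = (\<lambda>p. fst x p * inverse (g p) ^ snd x + spw g L p)" by (rule ext) simp
  show ?case unfolding e using Cons assms(2,3)
    by (auto intro!: differentiable_add differentiable_mult invpow_differentiable)
qed

lemma spw_dpart:
  assumes "\<forall>x\<in>set L. (\<forall>p. fst x differentiable (at p))" "\<forall>p. g differentiable (at p)" "\<forall>p. g p \<noteq> 0"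
  shows "dpart b (spw g L) p = spw g (Dspw b g L) p"
  using assms(1)
proof (induction L)
  case Nil
  then show ?case by (simp add: spw_def dpart_const)
next
  case (Cons x L)
  have e: "spw g (x # L) = (\<lambda>p. fst x p * inverse (g p) ^ snd x + spw g L p)" by (rule ext) simp
  have dw: "(\<lambda>q. inverse (g q) ^ snd x) differentiable (at p)"
    using assms(2,3) invpow_differentiable by blast
  have d1: "(\<lambda>p. fst x p * inverse (g p) ^ snd x) differentiable (at p)"
    using Cons.prems dw by (auto intro!: differentiable_mult)
  have d2: "spw g L differentiable (at p)" using Cons.prems spw_differentiable assms by auto
  have dfx: "fst x differentiable (at p)" using Cons.prems by auto
  have w: "dpart b (\<lambda>q. inverse (g q) ^ snd x) p = - real (snd x) * inverse (g p) ^ (Suc (snd x)) * dpart b g p"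
    by (rule dpart_comp_real[OF deriv_inv_pow]) (use assms(2,3) in auto)
  show ?case unfolding e
    using dpart_add[OF d1 d2, of b] dpart_mult[OF dfx dw, of b] w Cons
    by (simp add: algebra_simps)
qed

lemma symb_inverse:
  fixes g :: "('n::finite) pt \<Rightarrow> real"
  assumes g: "symb 0 g" and c: "c > 0" "\<And>p. c \<le> \<bar>g p\<bar>"
  shows "symb 0 (\<lambda>p. inverse (g p))"
proof -
  have gnz: "\<forall>p. g p \<noteq> 0" using c by (metis abs_zero not_le)
  have gd: "\<forall>p. g differentiable (at p)" using symb_D[OF g] by blast
  let ?P = "\<lambda>m h. \<exists>L::(('n pt \<Rightarrow> real) \<times> nat) list. (\<forall>x\<in>set L. symb m (fst x)) \<and> h = spw g L"
  have "symb 0 (spw g [(\<lambda>p. 1, 1)])"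
  proof (rule symb_coinduct[of ?P])
    show "?P 0 (spw g [(\<lambda>p. 1, 1)])" by (intro exI[of _ "[(\<lambda>p. 1, 1)]"]) (auto simp: symb_const)
  next
    fix m and h :: "'n pt \<Rightarrow> real" assume "?P m h"
    then obtain L :: "(('n pt \<Rightarrow> real) \<times> nat) list" where
      L: "\<forall>x\<in>set L. symb m (fst x)" and h: "h = spw g L" by blast
    have dL: "\<forall>x\<in>set L. (\<forall>p. fst x differentiable (at p))" using L symb_D by blast
    have "\<forall>p. h differentiable (at p)" unfolding h using spw_differentiable[OF dL gd gnz] by blast
    moreover have "\<exists>C. \<forall>p. \<bar>h p\<bar> \<le> C * jbr (snd p) powr m" unfolding h using L
    proof (induction L)
      case Nil
      then show ?case by (auto intro: exI[of _ 0])
    next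
      case (Cons x L)
      obtain C0 where C0: "\<forall>p. \<bar>spw g L p\<bar> \<le> C0 * jbr (snd p) powr m" using Cons by auto
      obtain C1 where C1: "\<forall>p. \<bar>fst x p\<bar> \<le> C1 * jbr (snd p) powr m"
        using Cons.prems symb_D by (metis list.set_intros(1))
      have "\<bar>spw g (x # L) p\<bar> \<le> (\<bar>C1\<bar> * inverse c ^ snd x + C0) * jbr (snd p) powr m" for p
      proof -
        have a: "\<bar>fst x p\<bar> \<le> \<bar>C1\<bar> * jbr (snd p) powr m"
          using C1[rule_format, of p] by (smt (verit) mult_right_mono powr_ge_zero)
        have b: "\<bar>inverse (g p) ^ snd x\<bar> \<le> inverse c ^ snd x"
          unfolding power_abs abs_inverse
          by (rule power_mono) (auto intro: le_imp_inverse_le[OF c(2) c(1)])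
        have "\<bar>fst x p * inverse (g p) ^ snd x\<bar> \<le> (\<bar>C1\<bar> * jbr (snd p) powr m) * inverse c ^ snd x"
          unfolding abs_mult by (rule mult_mono[OF a b]) auto
        then show ?thesis using C0[rule_format, of p] by (simp add: algebra_simps)
      qed
      then show ?case by blast
    qed
    moreover have "\<forall>b\<in>Basis. ?P (m - iota b) (dpart b h)"
    proof
      fix b :: "'n pt" assume b: "b \<in> Basis"
      have "dpart b h = spw g (Dspw b g L)" unfolding h
        by (rule ext) (rule spw_dpart[OF dL gd gnz])
      moreover have "\<forall>x\<in>set (Dspw b g L). symb (m - iota b) (fst x)"
      proof
        fix y assume "y \<in> set (Dspw b g L)"
        then obtain x where x: "x \<in> set L" and y: "y = (dpart b (fst x), snd x) \<or>
            y = (\<lambda>q. - real (snd x) * fst x q * dpart b g q, Suc (snd x))"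
          unfolding Dspw_def by auto
        have s1: "symb m (fst x)" using L x by auto
        have s3: "symb (m - iota b) (dpart b (fst x))" using symb_D[OF s1] b by blast
        have s4: "symb (0 - iota b) (dpart b g)" using symb_D[OF g] b by blast
        have s5: "symb (m - iota b) (\<lambda>q. - real (snd x) * fst x q * dpart b g q)"
        proof -
          have s6: "symb (m - iota b) (\<lambda>q. fst x q * dpart b g q)" by (rule symb_mult'[OF s1 s4]) simp
          show ?thesis using symb_scale[OF s6, of "- real (snd x)"] by (simp add: mult.assoc)
        qed
        show "symb (m - iota b) (fst y)"
          using y s3 s5 by auto
      qed
      ultimately show "?P (m - iota b) (dpart b h)" by blast
    qed
    ultimately show "(\<forall>p. h differentiable (at p)) \<and> (\<exists>C. \<forall>p. \<bar>h p\<bar> \<le> C * jbr (snd p) powr m) \<and> (\<forall>b\<in>Basis. ?P (m - iota b) (dpart b h))"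
      by blast
  qed
  moreover have "spw g [(\<lambda>p. 1, 1)] = (\<lambda>p. inverse (g p))" by (rule ext) simp
  ultimately show ?thesis by simp
qed

lemma dpart_coord: "dpart b (\<lambda>q::('n::finite) pt. snd q $ k) = (\<lambda>q. snd b $ k)"
proof (rule ext)
  fix q :: "'n pt"
  have bl: "bounded_linear (\<lambda>v::'n pt. snd v $ k)"
    by (rule bounded_linear_compose[OF bounded_linear_vec_nth bounded_linear_snd])
  have "((\<lambda>q::'n pt. snd q $ k) has_derivative (\<lambda>v. snd v $ k)) (at q)"
    by (rule bounded_linear_imp_has_derivative[OF bl])
  then show "dpart b (\<lambda>q. snd q $ k) q = snd b $ k" by (rule dpart_has_derivative)
qed

lemma symb_coord: "symb 1 (\<lambda>q::('n::finite) pt. snd q $ k)"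
proof (rule symb_I)
  show "\<forall>p. (\<lambda>q::'n pt. snd q $ k) differentiable at p"
    using bounded_linear_imp_has_derivative[OF bounded_linear_compose[OF bounded_linear_vec_nth bounded_linear_snd]]
    by (auto simp: differentiable_def)
  show "\<exists>C. \<forall>p::'n pt. \<bar>snd p $ k\<bar> \<le> C * jbr (snd p) powr 1"
  proof (intro exI[of _ 1] allI)
    fix p :: "'n pt"
    have "\<bar>snd p $ k\<bar> \<le> norm (snd p)" by (rule component_le_norm_cart)
    also have "\<dots> \<le> jbr (snd p)" by (rule norm_le_jbr)
    finally show "\<bar>snd p $ k\<bar> \<le> 1 * jbr (snd p) powr 1" using jbr_pos by simp
  qed
  show "\<forall>b\<in>Basis. symb (1 - iota b) (dpart b (\<lambda>q::'n pt. snd q $ k))"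
  proof
    fix b :: "'n pt" assume b: "b \<in> Basis"
    show "symb (1 - iota b) (dpart b (\<lambda>q::'n pt. snd q $ k))"
    proof (cases "fst b = 0")
      case True
      then show ?thesis unfolding dpart_coord iota_def by (simp add: symb_const)
    next
      case False
      then have "snd b = 0" using b by (auto simp: Basis_prod_def)
      then show ?thesis unfolding dpart_coord by (simp add: symb_const0)
    qed
  qed
qed

lemma iter_part_slice:
  fixes f :: "('n::finite) pt \<Rightarrow> real"
  shows "iter_part vs (\<lambda>v. f (u, v)) = (\<lambda>v. iter_part (map (\<lambda>e. (0, e)) vs) f (u, v))"
proof (induction vs)
  case Nil
  then show ?case by simp
next
  case (Cons e vs)
  show ?case
  proof (rule ext)
    fix v
    have "iter_part (e # vs) (\<lambda>v. f (u, v)) v = deriv (\<lambda>t. iter_part (map (\<lambda>e. (0, e)) vs) f (u, v + t *\<^sub>R e)) 0"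
      by (simp add: Cons dpart_def)
    also have "\<dots> = deriv (\<lambda>t. iter_part (map (\<lambda>e. (0, e)) vs) f ((u, v) + t *\<^sub>R (0, e))) 0"
      by simp
    finally show "iter_part (e # vs) (\<lambda>v. f (u, v)) v = iter_part (map (\<lambda>e. (0, e)) (e # vs)) f (u, v)"
      by (simp add: dpart_def)
  qed
qed

lemma smooth_slice:
  fixes f :: "('n::finite) pt \<Rightarrow> real"
  assumes "smooth_fun f"
  shows "smooth_fun (\<lambda>v. f (u, v))"
  unfolding smooth_fun_def
proof (intro allI impI)
  fix vs :: "(real^'n) list" and p assume vs: "set vs \<subseteq> Basis"
  have "set (map (\<lambda>e. (0::((real^'n) \<times> (real^'n)), e)) vs) \<subseteq> Basis"
    using vs by (auto simp: Basis_prod_def)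
  then have d: "iter_part (map (\<lambda>e. (0, e)) vs) f differentiable (at (u, p))"
    using assms unfolding smooth_fun_def by blast
  have i: "(\<lambda>v. (u, v)) differentiable (at p)"
    by (auto intro!: derivative_eq_intros simp: differentiable_def)
  show "iter_part vs (\<lambda>v. f (u, v)) differentiable (at p)"
    unfolding iter_part_slice using differentiable_chain_at[OF i d] by (simp add: o_def)
qed



lemma vec_lambda_expansion: "(\<chi> l. g l) = (\<Sum>l\<in>UNIV. g l *\<^sub>R axis l (1::real))"
  using basis_expansion[of "\<chi> l. g l"] by (simp add: scalar_mult_eq_scaleR)

lemma has_derivative_vec_lambda_at:
  fixes f :: "'n::finite \<Rightarrow> 'a::real_normed_vector \<Rightarrow> real"
  assumes "\<And>l. (f l has_derivative f' l) (at q)"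
  shows "((\<lambda>q. \<chi> l. f l q) has_derivative (\<lambda>v. \<chi> l. f' l v)) (at q)"
proof -
  have "((\<lambda>q. \<Sum>l\<in>UNIV. f l q *\<^sub>R axis l (1::real)) has_derivative (\<lambda>v. \<Sum>l\<in>UNIV. f' l v *\<^sub>R axis l (1::real))) (at q)"
    by (intro has_derivative_sum has_derivative_scaleR_left assms)
  then show ?thesis by (subst (1 2) vec_lambda_expansion)
qed

lemma basis_pt_cases:
  fixes b :: "('n::finite) pt"
  assumes "b \<in> Basis"
  obtains (U) bu where "bu \<in> Basis" "b = (bu, 0)" | (X) j where "b = (0, axis j 1)"
proof -
  have "b \<in> (\<lambda>u. (u, 0)) ` Basis \<union> (\<lambda>v. (0, v)) ` Basis" using assms by (simp add: Basis_prod_def)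
  then show thesis
  proof
    assume "b \<in> (\<lambda>u. (u, 0)) ` Basis"
    then obtain bu where "bu \<in> Basis" "b = (bu, 0)" by blast
    then show thesis by (rule U)
  next
    assume "b \<in> (\<lambda>v. (0, v)) ` Basis"
    then obtain v where v: "v \<in> Basis" "b = (0, v)" by blast
    then obtain j u where "u \<in> (Basis::real set)" "v = axis j u" unfolding Basis_vec_def by blast
    then have "v = axis j 1" by simp
    then show thesis using X v by simp
  qed
qed

lemma iota_U: "bu \<in> Basis \<Longrightarrow> iota (bu, 0) = 0"
  by (auto simp: iota_def nonzero_Basis)

lemma iota_X: "iota (0, e) = 1"
  by (simp add: iota_def)

lemma X_in_Basis: "(0, axis j 1) \<in> (Basis :: ('n::finite) pt set)"
  by (auto simp: Basis_prod_def)

locale L15 =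
  fixes a :: "('n::finite) pt \<Rightarrow> real" and \<delta> :: real
  assumes dy_symb: "\<And>j. symb 1 (dy j a)"
    and delta: "0 \<le> \<delta>" "\<delta> < 1"
    and hess: "\<And>p. onorm (\<lambda>v. hess_xi_y a p *v v) \<le> \<delta>"
begin

definition Lk :: "'n \<Rightarrow> 'n pt \<Rightarrow> real" where "Lk l q = Lam a q $ l"

lemma Lk_eq: "Lk l = (\<lambda>q. snd q $ l + dy l a q)"
  by (rule ext) (simp add: Lk_def Lam_def)

lemma symb_Lk: "symb 1 (Lk l)"
  unfolding Lk_eq by (rule symb_add[OF symb_coord dy_symb])

lemma Lam_vec: "Lam a q = (\<chi> l. Lk l q)"
  by (simp add: Lk_def vec_eq_iff)

definition DL :: "'n \<Rightarrow> 'n pt \<Rightarrow> 'n pt \<Rightarrow> real" where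
  "DL l q = (SOME D. (Lk l has_derivative D) (at q))"

lemma DL: "(Lk l has_derivative DL l q) (at q)"
proof -
  have "Lk l differentiable (at q)" using symb_D[OF symb_Lk] by blast
  then show ?thesis unfolding DL_def differentiable_def by (rule someI_ex)
qed

lemma DL_dpart: "DL l q v = dpart v (Lk l) q"
  using dpart_has_derivative[OF DL] by simp

lemma DL_linear: "linear (DL l q)"
  using DL has_derivative_linear by blast

definition J :: "'n pt \<Rightarrow> real^'n^'n" where "J q = (\<chi> l j. DL l q (0, axis j 1))"
definition A :: "'n pt \<Rightarrow> ((real,'n) vec \<times> (real,'n) vec) \<Rightarrow> (real,'n) vec" where "A q u = (\<chi> l. DL l q (u, 0))"

lemma A_zero: "A q 0 = 0"
  using linear_0[OF DL_linear] by (simp add: A_def vec_eq_iff zero_prod_def)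

lemma DL_split: "DL l q (u, z) = A q u $ l + (J q *v z) $ l"
proof -
  interpret lin: linear "DL l q" by (rule DL_linear)
  have "(u, z) = (u, 0) + (\<Sum>j\<in>UNIV. z $ j *\<^sub>R (0, axis j 1))"
  proof -
    have "(\<Sum>j\<in>UNIV. z $ j *\<^sub>R ((0::((real,'n) vec \<times> (real,'n) vec)), axis j (1::real))) = (0, \<Sum>j\<in>UNIV. z $ j *\<^sub>R axis j 1)"
      by (simp add: prod_eq_iff fst_sum snd_sum)
    also have "(\<Sum>j\<in>UNIV. z $ j *\<^sub>R axis j (1::real)) = z"
      using basis_expansion[of z] by (simp add: scalar_mult_eq_scaleR)
    finally show ?thesis by simp
  qed
  then have "DL l q (u, z) = DL l q ((u, 0) + (\<Sum>j\<in>UNIV. z $ j *\<^sub>R (0, axis j 1)))"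
    by (rule arg_cong)
  also have "\<dots> = DL l q (u, 0) + (\<Sum>j\<in>UNIV. z $ j * DL l q (0, axis j 1))"
    by (simp only: lin.add lin.sum lin.scale real_scaleR_def)
  also have "\<dots> = A q u $ l + (J q *v z) $ l"
    by (simp add: A_def J_def matrix_vector_mult_def mult.commute)
  finally show ?thesis .
qed

lemma J_entry: "J q $ l $ j = dpart (0, axis j 1) (Lk l) q"
  by (simp add: J_def DL_dpart)

lemma symb_J: "symb 0 (\<lambda>q. J q $ l $ j)"
proof -
  have "symb (1 - iota (0::((real,'n) vec \<times> (real,'n) vec), axis j (1::real))) (dpart (0, axis j 1) (Lk l))"
    using symb_D[OF symb_Lk] X_in_Basis by blast
  then show ?thesis unfolding J_entry iota_X by simp
qed

lemma J_hess: "J q = mat 1 + transpose (hess_xi_y a q)"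
proof -
  have "J q $ l $ j = (if l = j then 1 else 0) + hess_xi_y a q $ j $ l" for l j
  proof -
    have d1: "(\<lambda>q::'n pt. snd q $ l) differentiable (at q)"
      using symb_D[OF symb_coord] by blast
    have d2: "dy l a differentiable (at q)"
      using symb_D[OF dy_symb] by blast
    have "J q $ l $ j = dpart (0, axis j 1) (\<lambda>q. snd q $ l) q + dpart (0, axis j 1) (dy l a) q"
      unfolding J_entry Lk_eq by (rule dpart_add[OF d1 d2])
    also have "\<dots> = (if l = j then 1 else 0) + hess_xi_y a q $ j $ l"
      by (simp add: dpart_coord hess_xi_y_def dxi_def zero_prod_def axis_def)
    finally show ?thesis .
  qed
  then show ?thesis by (simp add: vec_eq_iff mat_def transpose_def)
qed

end



lemma det_bound:
  fixes M :: "real^'k::finite^'k"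
  assumes "\<And>i j. \<bar>M $ i $ j\<bar> \<le> B"
  shows "\<bar>det M\<bar> \<le> real (card {p. p permutes (UNIV::'k set)}) * B ^ CARD('k)"
proof -
  have B0: "0 \<le> B" using assms[of undefined undefined] by linarith
  have "\<bar>det M\<bar> \<le> (\<Sum>p\<in>{p. p permutes (UNIV::'k set)}. \<bar>of_int (sign p) * (\<Prod>i\<in>UNIV. M $ i $ p i)\<bar>)"
    unfolding det_def by (rule sum_abs)
  also have "\<dots> \<le> (\<Sum>p\<in>{p. p permutes (UNIV::'k set)}. B ^ CARD('k))"
  proof (rule sum_mono)
    fix p :: "'k \<Rightarrow> 'k"
    have "\<bar>of_int (sign p) * (\<Prod>i\<in>UNIV. M $ i $ p i)\<bar> = (\<Prod>i\<in>UNIV. \<bar>M $ i $ p i\<bar>)"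
      by (simp add: abs_mult abs_prod flip: of_int_abs)
    also have "\<dots> \<le> (\<Prod>i\<in>(UNIV::'k set). B)"
      by (rule prod_mono) (simp add: assms)
    also have "\<dots> = B ^ CARD('k)" by simp
    finally show "\<bar>of_int (sign p) * (\<Prod>i\<in>UNIV. M $ i $ p i)\<bar> \<le> B ^ CARD('k)" .
  qed
  also have "\<dots> = real (card {p. p permutes (UNIV::'k set)}) * B ^ CARD('k)" by simp
  finally show ?thesis .
qed

context L15
begin

lemma Hnorm: "norm (transpose (hess_xi_y a q) *v x) \<le> \<delta> * norm x"
proof -
  define H where "H = hess_xi_y a q"
  define y where "y = transpose H *v x"
  have bH: "norm (H *v v) \<le> \<delta> * norm v" for v
  proof -
    have "norm (H *v v) \<le> onorm ((*v) H) * norm v"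
      by (rule onorm[OF matrix_vector_mul_bounded_linear])
    also have "\<dots> \<le> \<delta> * norm v"
      using hess[of q] unfolding H_def by (intro mult_right_mono) auto
    finally show ?thesis .
  qed
  have yx: "y = x v* H" unfolding y_def using vector_transpose_matrix[of x "transpose H"] by simp
  have "norm y ^ 2 = y \<bullet> y" by (simp add: power2_norm_eq_inner)
  also have "\<dots> = (x v* H) \<bullet> y" using yx by simp
  also have "\<dots> = x \<bullet> (H *v y)" by (rule dot_lmul_matrix)
  also have "\<dots> \<le> norm x * norm (H *v y)" by (rule norm_cauchy_schwarz)
  also have "\<dots> \<le> norm x * (\<delta> * norm y)" by (rule mult_left_mono[OF bH]) simp
  finally have *: "norm y ^ 2 \<le> \<delta> * norm x * norm y" by (simp add: algebra_simps)
  show ?thesis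
  proof (cases "norm y = 0")
    case True
    then show ?thesis unfolding y_def[symmetric] H_def[symmetric] using delta by simp
  next
    case False
    then have "norm y > 0" by simp
    with * have "norm y \<le> \<delta> * norm x" by (simp add: power2_eq_square)
    then show ?thesis unfolding y_def H_def .
  qed
qed

lemma J_apply: "J q *v x = x + transpose (hess_xi_y a q) *v x"
  by (simp add: J_hess matrix_vector_mult_add_rdistrib)

lemma Jlow: "(1 - \<delta>) * norm x \<le> norm (J q *v x)"
proof -
  have "norm x - norm (transpose (hess_xi_y a q) *v x) \<le> norm (J q *v x)"
    unfolding J_apply by (rule norm_diff_ineq)
  then show ?thesis using Hnorm[where q=q and x=x] by (simp add: algebra_simps)
qed

lemma J_inj: "inj ((*v) (J q))"
proof (rule injI)
  fix x y assume "J q *v x = J q *v y"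
  then have "J q *v (x - y) = 0" by (simp add: matrix_vector_mult_diff_distrib)
  then have "(1 - \<delta>) * norm (x - y) \<le> 0" using Jlow[where q=q and x="x - y"] by simp
  then have "norm (x - y) \<le> 0" using delta by (simp add: mult_le_0_iff)
  then show "x = y" by simp
qed

lemma J_invertible: "invertible (J q)"
  unfolding invertible_left_inverse matrix_left_invertible_injective by (rule J_inj)

lemma detJ_nz: "det (J q) \<noteq> 0"
  using invertible_det_nz J_invertible by (rule iffD1)

definition N :: "'n pt \<Rightarrow> real^'n^'n" where
  "N q = (\<chi> i j. det (\<chi> r s. if s = i then axis j 1 $ r else J q $ r $ s) / det (J q))"

lemma N_inv: "N q ** J q = mat 1" "J q ** N q = mat 1"
proof -
  obtain B where B: "J q ** B = mat 1" "B ** J q = mat 1"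
    using J_invertible unfolding invertible_def by blast
  have "B $ i $ j = N q $ i $ j" for i j
  proof -
    have "J q *v (B *v axis j 1) = axis j 1"
      by (simp add: matrix_vector_mul_assoc B(1))
    then have "B *v axis j 1 = (\<chi> k. det (\<chi> r s. if s = k then axis j 1 $ r else J q $ r $ s) / det (J q))"
      by (rule iffD1[OF cramer[OF detJ_nz]])
    then have "(B *v axis j 1) $ i = N q $ i $ j" by (simp add: N_def)
    moreover have "(B *v axis j 1) $ i = B $ i $ j"
      by (simp add: matrix_vector_mult_basis column_def)
    ultimately show ?thesis by simp
  qed
  then have "B = N q" by (simp add: vec_eq_iff)
  then show "N q ** J q = mat 1" "J q ** N q = mat 1" using B by simp_all
qed

lemma N_J: "N q *v (J q *v z) = z"
  by (simp add: matrix_vector_mul_assoc N_inv)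

lemma J_N: "J q *v (N q *v z) = z"
  by (simp add: matrix_vector_mul_assoc N_inv)

lemma N_bound: "norm (N q *v y) \<le> norm y / (1 - \<delta>)"
  using Jlow[where q=q and x="N q *v y"] delta by (simp add: J_N field_simps)

lemma N_entry_bound: "\<bar>N q $ i $ j\<bar> \<le> 1 / (1 - \<delta>)"
proof -
  have "N q $ i $ j = (N q *v axis j 1) $ i"
    by (simp add: matrix_vector_mult_basis column_def)
  also have "\<bar>\<dots>\<bar> \<le> norm (N q *v axis j 1)" by (rule component_le_norm_cart)
  also have "\<dots> \<le> 1 / (1 - \<delta>)" using N_bound[where q=q and y="axis j 1"] by simp
  finally show ?thesis .
qed

definition K0 :: real where
  "K0 = real (card {p. p permutes (UNIV::'n set)}) * (1 / (1 - \<delta>)) ^ CARD('n)"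

lemma K0_pos: "K0 > 0"
proof -
  have fin: "finite {p. p permutes (UNIV::'n set)}" by (rule finite_permutations) simp
  have "id \<in> {p. p permutes (UNIV::'n set)}" by (simp add: permutes_id)
  then have "{p. p permutes (UNIV::'n set)} \<noteq> {}" by blast
  then have "card {p. p permutes (UNIV::'n set)} > 0" using fin by (simp add: card_gt_0_iff)
  then have c: "0 < real (card {p. p permutes (UNIV::'n set)})" by simp
  have p: "0 < (1 / (1 - \<delta>)) ^ CARD('n)" using delta by (intro zero_less_power) simp
  show ?thesis unfolding K0_def by (rule mult_pos_pos[OF c p])
qed

lemma detN_bound: "\<bar>det (N q)\<bar> \<le> K0"
  unfolding K0_def by (rule det_bound[OF N_entry_bound])

lemma detJ_detN: "det (J q) * det (N q) = 1"
  using det_mul[of "J q" "N q"] N_inv(2) by simp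

lemma detN_eq: "det (N q) = inverse (det (J q))"
  using detJ_detN[of q] detJ_nz[of q] by (simp add: field_simps)

lemma detJ_low: "inverse K0 \<le> \<bar>det (J q)\<bar>"
proof -
  have "1 = \<bar>det (J q)\<bar> * \<bar>det (N q)\<bar>" using detJ_detN[of q] by (metis abs_mult abs_one)
  also have "\<dots> \<le> \<bar>det (J q)\<bar> * K0" by (rule mult_left_mono[OF detN_bound]) simp
  finally show ?thesis using K0_pos by (simp add: field_simps)
qed

lemma symb_invdetJ: "symb 0 (\<lambda>q. inverse (det (J q)))"
  by (rule symb_inverse[OF symb_det[OF symb_J], of "inverse K0"]) (simp_all add: K0_pos detJ_low)

lemma symb_N: "symb 0 (\<lambda>q. N q $ i $ j)"
proof -
  have e: "(\<lambda>q. N q $ i $ j) = (\<lambda>q. det (\<chi> r s. if s = i then axis j 1 $ r else J q $ r $ s) * inverse (det (J q)))"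
    by (rule ext) (simp add: N_def divide_inverse)
  have s1: "symb 0 (\<lambda>q. det (\<chi> r s. if s = i then axis j 1 $ r else J q $ r $ s))"
  proof (rule symb_det)
    fix r s
    show "symb 0 (\<lambda>q. (\<chi> r s. if s = i then axis j 1 $ r else J q $ r $ s) $ r $ s)"
      by (cases "s = i") (simp_all add: symb_const symb_J)
  qed
  show ?thesis unfolding e by (rule symb_mult'[OF s1 symb_invdetJ]) simp
qed

end



lemma powr_compare:
  fixes x y K m :: real
  assumes "0 < x" "0 < y" "0 < K" "x \<le> K * y" "y \<le> K * x"
  shows "x powr m \<le> K powr \<bar>m\<bar> * y powr m"
proof (cases "0 \<le> m")
  case True
  have "x powr m \<le> (K * y) powr m" by (rule powr_mono2) (use assms True in auto)
  also have "\<dots> = K powr \<bar>m\<bar> * y powr m" using assms True by (simp add: powr_mult)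
  finally show ?thesis .
next
  case False
  have "y / K \<le> x" using assms by (simp add: field_simps)
  then have "x powr m \<le> (y / K) powr m" using powr_mono2'[of m "y / K" x] assms False by simp
  also have "\<dots> = y powr m / K powr m" by (rule powr_divide)
  also have "\<dots> = K powr \<bar>m\<bar> * y powr m"
    using False by (simp add: powr_minus divide_inverse)
  finally show ?thesis .
qed

context L15
begin

lemma Lam_slice_deriv: "((\<lambda>\<xi>. Lam a (u, \<xi>)) has_derivative (\<lambda>v. J (u, \<xi>) *v v)) (at \<xi>)"
proof -
  have d1: "((\<lambda>\<xi>. (u, \<xi>)) has_derivative (\<lambda>v. (0, v))) (at \<xi>)"
    by (rule has_derivative_Pair[OF has_derivative_const has_derivative_ident, simplified])
  have d2: "((\<lambda>q. \<chi> l. Lk l q) has_derivative (\<lambda>v. \<chi> l. DL l (u, \<xi>) v)) (at (u, \<xi>))"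
    by (rule has_derivative_vec_lambda_at[OF DL])
  have "((\<lambda>\<xi>. \<chi> l. Lk l (u, \<xi>)) has_derivative (\<lambda>v. \<chi> l. DL l (u, \<xi>) (0, v))) (at \<xi>)"
    using has_derivative_compose[OF d1 d2] by simp
  moreover have "(\<lambda>v. \<chi> l. DL l (u, \<xi>) (0, v)) = (\<lambda>v. J (u, \<xi>) *v v)"
    by (rule ext) (simp add: vec_eq_iff DL_split A_zero)
  ultimately show ?thesis by (simp add: Lam_vec)
qed

lemma Gy_lipschitz: "norm ((Lam a (u, x) - x) - (Lam a (u, y) - y)) \<le> \<delta> * norm (x - y)"
proof (rule differentiable_bound[where S=UNIV and f="\<lambda>\<xi>. Lam a (u, \<xi>) - \<xi>"
      and f'="\<lambda>\<xi> v. J (u, \<xi>) *v v - v"])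
  fix \<xi> :: "real^'n"
  show "((\<lambda>\<xi>. Lam a (u, \<xi>) - \<xi>) has_derivative (\<lambda>v. J (u, \<xi>) *v v - v)) (at \<xi> within UNIV)"
    by (auto intro!: has_derivative_diff Lam_slice_deriv has_derivative_ident)
  show "onorm (\<lambda>v. J (u, \<xi>) *v v - v) \<le> \<delta>"
  proof (rule onorm_le)
    fix v
    show "norm (J (u, \<xi>) *v v - v) \<le> \<delta> * norm v"
      using Hnorm[where q="(u, \<xi>)" and x=v] by (simp add: J_apply)
  qed
qed auto

lemma Lam_low: "(1 - \<delta>) * norm (x - y) \<le> norm (Lam a (u, x) - Lam a (u, y))"
proof -
  have e: "Lam a (u, x) - Lam a (u, y) = (x - y) + ((Lam a (u, x) - x) - (Lam a (u, y) - y))"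
    by simp
  have "norm (x - y) - norm ((Lam a (u, x) - x) - (Lam a (u, y) - y)) \<le> norm (Lam a (u, x) - Lam a (u, y))"
    unfolding e by (rule norm_diff_ineq)
  then show ?thesis using Gy_lipschitz[where u=u and x=x and y=y] by (simp add: algebra_simps)
qed

lemma Lam_inj: "inj (\<lambda>\<xi>. Lam a (u, \<xi>))"
proof (rule injI)
  fix x y assume "Lam a (u, x) = Lam a (u, y)"
  then have "(1 - \<delta>) * norm (x - y) \<le> 0" using Lam_low[where u=u and x=x and y=y] by simp
  then have "norm (x - y) \<le> 0" using delta by (simp add: mult_le_0_iff)
  then show "x = y" by simp
qed

lemma Lam_surj: "surj (\<lambda>\<xi>. Lam a (u, \<xi>))"
proof -
  have "\<exists>\<xi>. Lam a (u, \<xi>) = \<eta>" for \<eta>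
  proof -
    define T where "T \<xi> = \<eta> - (Lam a (u, \<xi>) - \<xi>)" for \<xi>
    have "\<forall>x y. dist (T x) (T y) \<le> \<delta> * dist x y"
    proof (intro allI)
      fix x y
      have "dist (T x) (T y) = norm ((Lam a (u, x) - x) - (Lam a (u, y) - y))"
        unfolding T_def dist_norm by (simp add: norm_minus_commute algebra_simps)
      also have "\<dots> \<le> \<delta> * dist x y" using Gy_lipschitz by (simp add: dist_norm)
      finally show "dist (T x) (T y) \<le> \<delta> * dist x y" .
    qed
    then obtain \<xi> where "T \<xi> = \<xi>" using banach_fix_type[OF delta] by blast
    then have "Lam a (u, \<xi>) = \<eta>" unfolding T_def by (simp add: algebra_simps)
    then show ?thesis by blast
  qed
  then show ?thesis by (metis surjI)
qed

lemma Lam_bij: "bij (\<lambda>\<xi>. Lam a (u, \<xi>))"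
  using Lam_inj Lam_surj by (simp add: bij_def)

lemma lam_slice: "lam a (u, \<eta>) = inv (\<lambda>\<xi>. Lam a (u, \<xi>)) \<eta>"
  by (simp add: lam_def)

lemma Lam_lam: "Lam a (fst p, lam a p) = snd p"
proof -
  have "lam a p = inv (\<lambda>\<xi>. Lam a (fst p, \<xi>)) (snd p)" by (simp add: lam_def)
  then show ?thesis using surj_f_inv_f[OF Lam_surj[of "fst p"], of "snd p"] by simp
qed

lemma lam_Lam: "lam a (u, Lam a (u, \<xi>)) = \<xi>"
  unfolding lam_slice by (rule inv_f_f[OF Lam_inj])

end



context L15
begin

lemma dy_bound_ex: "\<exists>Cs\<ge>0. \<forall>p. norm (Lam a p - snd p) \<le> Cs * jbr (snd p)"
proof -
  have "\<forall>k. \<exists>C. \<forall>p. \<bar>dy k a p\<bar> \<le> C * jbr (snd p) powr 1"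
    using symb_D[OF dy_symb] by blast
  then obtain C where C: "\<And>k p. \<bar>dy k a p\<bar> \<le> C k * jbr (snd p) powr 1" by metis
  have C': "\<bar>dy k a p\<bar> \<le> \<bar>C k\<bar> * jbr (snd p)" for k p
  proof -
    have "\<bar>dy k a p\<bar> \<le> C k * jbr (snd p)" using C[of k p] jbr_pos[of "snd p"] by simp
    also have "\<dots> \<le> \<bar>C k\<bar> * jbr (snd p)" using jbr_pos[of "snd p"] by (intro mult_right_mono) auto
    finally show ?thesis .
  qed
  have "norm (Lam a p - snd p) \<le> (\<Sum>k\<in>UNIV. \<bar>C k\<bar>) * jbr (snd p)" for p
  proof -
    have "Lam a p - snd p = (\<chi> k. dy k a p)" by (simp add: Lam_def)
    then have "norm (Lam a p - snd p) \<le> (\<Sum>k\<in>UNIV. \<bar>dy k a p\<bar>)"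
      using norm_le_l1_cart[of "\<chi> k. dy k a p"] by simp
    also have "\<dots> \<le> (\<Sum>k\<in>UNIV. \<bar>C k\<bar> * jbr (snd p))" by (rule sum_mono) (rule C')
    also have "\<dots> = (\<Sum>k\<in>UNIV. \<bar>C k\<bar>) * jbr (snd p)" by (simp add: sum_distrib_right)
    finally show ?thesis .
  qed
  moreover have "0 \<le> (\<Sum>k\<in>UNIV. \<bar>C k\<bar>)" by (simp add: sum_nonneg)
  ultimately show ?thesis by blast
qed

definition Cs :: real where "Cs = (SOME Cs. Cs \<ge> 0 \<and> (\<forall>p. norm (Lam a p - snd p) \<le> Cs * jbr (snd p)))"

lemma Cs: "Cs \<ge> 0" "norm (Lam a p - snd p) \<le> Cs * jbr (snd p)"
proof -
  have "Cs \<ge> 0 \<and> (\<forall>p. norm (Lam a p - snd p) \<le> Cs * jbr (snd p))"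
    unfolding Cs_def using someI_ex[OF dy_bound_ex] by simp
  then show "Cs \<ge> 0" "norm (Lam a p - snd p) \<le> Cs * jbr (snd p)" by blast+
qed

definition Kc :: real where "Kc = 2 + Cs + (1 + Cs) / (1 - \<delta>)"

lemma Kc_ge: "(1 + Cs) / (1 - \<delta>) \<ge> 0"
  using Cs(1) delta by (intro divide_nonneg_pos) auto

lemma Kc_pos: "Kc > 0"
  using Kc_ge Cs(1) unfolding Kc_def by linarith

lemma Lam_upper: "jbr (Lam a (u, \<xi>)) \<le> Kc * jbr \<xi>"
proof -
  have n: "norm (Lam a (u, \<xi>)) \<le> norm \<xi> + Cs * jbr \<xi>"
    using Cs(2)[of "(u, \<xi>)"] norm_triangle_sub[of "Lam a (u, \<xi>)" \<xi>] by simp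
  have "jbr (Lam a (u, \<xi>)) \<le> 1 + norm (Lam a (u, \<xi>))" by (rule jbr_le)
  also have "\<dots> \<le> jbr \<xi> + jbr \<xi> + Cs * jbr \<xi>" using n jbr_ge1[of \<xi>] norm_le_jbr[of \<xi>] by simp
  also have "\<dots> \<le> Kc * jbr \<xi>"
  proof -
    have h: "0 \<le> (1 + Cs) / (1 - \<delta>) * jbr \<xi>" using Kc_ge jbr_pos[of \<xi>] by (intro mult_nonneg_nonneg) auto
    have "Kc * jbr \<xi> = 2 * jbr \<xi> + Cs * jbr \<xi> + (1 + Cs) / (1 - \<delta>) * jbr \<xi>"
      unfolding Kc_def by (simp only: ring_distribs)
    then show ?thesis using h by linarith
  qed
  finally show ?thesis .
qed

lemma Lam_lower: "jbr \<xi> \<le> Kc * jbr (Lam a (u, \<xi>))"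
proof -
  define t where "t = jbr (Lam a (u, \<xi>))"
  have t1: "1 \<le> t" unfolding t_def by (rule jbr_ge1)
  have n0: "norm (Lam a (u, 0)) \<le> Cs" using Cs(2)[of "(u, 0)"] by (simp add: jbr_def)
  have "(1 - \<delta>) * norm \<xi> \<le> norm (Lam a (u, \<xi>) - Lam a (u, 0))"
    using Lam_low[where u=u and x=\<xi> and y=0] by simp
  also have "\<dots> \<le> norm (Lam a (u, \<xi>)) + norm (Lam a (u, 0))" by (rule norm_triangle_ineq4)
  also have "\<dots> \<le> t + Cs" using n0 norm_le_jbr[of "Lam a (u, \<xi>)"] unfolding t_def by simp
  finally have "(1 - \<delta>) * norm \<xi> \<le> t + Cs" .
  then have nx: "norm \<xi> \<le> (t + Cs) / (1 - \<delta>)" using delta by (simp add: field_simps)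
  have "0 \<le> Cs * (t - 1)" using t1 Cs(1) by simp
  then have "t + Cs \<le> (1 + Cs) * t" by (simp add: algebra_simps)
  then have "(t + Cs) / (1 - \<delta>) \<le> (1 + Cs) * t / (1 - \<delta>)" using delta by (simp add: divide_right_mono)
  have "jbr \<xi> \<le> 1 + norm \<xi>" by (rule jbr_le)
  also have "\<dots> \<le> 1 + (1 + Cs) * t / (1 - \<delta>)" using nx \<open>(t + Cs) / (1 - \<delta>) \<le> (1 + Cs) * t / (1 - \<delta>)\<close> by simp
  also have "\<dots> \<le> Kc * t"
  proof -
    have "0 \<le> Cs * t" using t1 Cs(1) by simp
    then have "1 \<le> (2 + Cs) * t" using t1 by (simp add: algebra_simps)
    then show ?thesis unfolding Kc_def by (simp add: algebra_simps)
  qed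
  finally show ?thesis unfolding t_def .
qed

lemma lam_upper: "jbr (lam a (u, \<eta>)) \<le> Kc * jbr \<eta>"
  using Lam_lower[where u=u and \<xi>="lam a (u, \<eta>)"] Lam_lam[of "(u, \<eta>)"] by simp

lemma lam_lower: "jbr \<eta> \<le> Kc * jbr (lam a (u, \<eta>))"
  using Lam_upper[where u=u and \<xi>="lam a (u, \<eta>)"] Lam_lam[of "(u, \<eta>)"] by simp

end



context L15
begin

definition F :: "'n pt \<Rightarrow> 'n pt" where "F q = (fst q, Lam a q)"
definition Phi :: "'n pt \<Rightarrow> 'n pt" where "Phi p = (fst p, lam a p)"
definition F' :: "'n pt \<Rightarrow> 'n pt \<Rightarrow> 'n pt" where "F' q v = (fst v, A q (fst v) + J q *v snd v)"
definition G' :: "'n pt \<Rightarrow> 'n pt \<Rightarrow> 'n pt" where "G' q w = (fst w, N q *v (snd w - A q (fst w)))"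

lemma F_Phi: "F (Phi p) = p"
  by (simp add: F_def Phi_def Lam_lam)

lemma Phi_F: "Phi (F q) = q"
proof -
  obtain u \<xi> where q: "q = (u, \<xi>)" by (cases q)
  show ?thesis by (simp add: F_def Phi_def q lam_Lam)
qed

lemma F_deriv: "(F has_derivative F' q) (at q)"
proof -
  have d1: "(fst has_derivative fst) (at q)"
    by (rule bounded_linear_imp_has_derivative[OF bounded_linear_fst])
  have d2: "((\<lambda>q. \<chi> l. Lk l q) has_derivative (\<lambda>v. \<chi> l. DL l q v)) (at q)"
    by (rule has_derivative_vec_lambda_at[OF DL])
  have "((\<lambda>q. (fst q, \<chi> l. Lk l q)) has_derivative (\<lambda>v. (fst v, \<chi> l. DL l q v))) (at q)"
    by (rule has_derivative_Pair[OF d1 d2])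
  moreover have "(\<lambda>q. (fst q, \<chi> l. Lk l q)) = F"
    by (rule ext) (simp add: F_def Lam_vec)
  moreover have "(\<lambda>v. (fst v, \<chi> l. DL l q v)) = F' q"
  proof (rule ext)
    fix v :: "'n pt"
    obtain u z where v: "v = (u, z)" by (cases v)
    show "(fst v, \<chi> l. DL l q v) = F' q v"
      by (simp add: v F'_def DL_split vec_eq_iff)
  qed
  ultimately show ?thesis by simp
qed

lemma F'_G': "F' q \<circ> G' q = id"
  by (rule ext) (simp add: F'_def G'_def J_N)

lemma Phi_deriv: "(Phi has_derivative G' (Phi p)) (at p)"
proof -
  have "(Phi has_derivative G' (Phi p)) (at (F (Phi p)))"
    by (rule has_derivative_inverse_on[where S=UNIV and f=F and f'=F' and g=Phi and g'=G'])
       (auto intro: F_deriv Phi_F F'_G')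
  then show ?thesis by (simp add: F_Phi)
qed

lemma Phi_differentiable: "Phi differentiable (at p)"
  using Phi_deriv unfolding differentiable_def by blast

lemma dpart_comp_Phi:
  assumes "\<forall>q. G differentiable (at q)"
  shows "dpart b (\<lambda>p. G (Phi p)) p = (\<Sum>c\<in>Basis. (G' (Phi p) b \<bullet> c) * dpart c G (Phi p))"
proof -
  obtain GD where GD: "(G has_derivative GD) (at (Phi p))"
    using assms unfolding differentiable_def by blast
  have "((\<lambda>p. G (Phi p)) has_derivative (\<lambda>x. GD (G' (Phi p) x))) (at p)"
    using has_derivative_compose[OF Phi_deriv GD] .
  then have "dpart b (\<lambda>p. G (Phi p)) p = GD (G' (Phi p) b)" by (rule dpart_has_derivative)
  also have "\<dots> = GD (\<Sum>c\<in>Basis. (G' (Phi p) b \<bullet> c) *\<^sub>R c)" by (simp add: euclidean_representation)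
  also have "\<dots> = (\<Sum>c\<in>Basis. (G' (Phi p) b \<bullet> c) * GD c)"
  proof -
    interpret lin: linear GD using GD has_derivative_linear by blast
    show ?thesis by (simp add: lin.sum lin.scale)
  qed
  also have "\<dots> = (\<Sum>c\<in>Basis. (G' (Phi p) b \<bullet> c) * dpart c G (Phi p))"
    using dpart_has_derivative[OF GD] by simp
  finally show ?thesis .
qed

definition HH :: "'n pt \<Rightarrow> 'n pt \<Rightarrow> 'n pt \<Rightarrow> real" where "HH b c q = G' q b \<bullet> c"

lemma A_entry: "A q bu $ l = dpart (bu, 0) (Lk l) q"
  by (simp add: A_def DL_dpart)

lemma symb_HH:
  assumes b: "b \<in> Basis" and c: "c \<in> Basis"
  shows "symb (iota c - iota b) (HH b c)"
  using c
proof (cases rule: basis_pt_cases)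
  case (U cu)
  note cU = U
  have e: "HH b c = (\<lambda>q. fst b \<bullet> cu)" by (rule ext) (simp add: HH_def G'_def U)
  show ?thesis using b
  proof (cases rule: basis_pt_cases)
    case (U bu)
    then show ?thesis unfolding e using cU by (simp add: iota_U symb_const)
  next
    case (X j)
    then show ?thesis unfolding e by (simp add: symb_const0)
  qed
next
  case (X i)
  note cX = X
  have e: "HH b c = (\<lambda>q. (N q *v (snd b - A q (fst b))) $ i)"
    by (rule ext) (simp add: HH_def G'_def X inner_axis)
  show ?thesis using b
  proof (cases rule: basis_pt_cases)
    case (U bu)
    have e2: "HH b c = (\<lambda>q. - (\<Sum>l\<in>UNIV. N q $ i $ l * dpart (bu, 0) (Lk l) q))"
      unfolding e by (rule ext) (simp add: U matrix_vector_mult_def A_entry sum_negf)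
    have s: "symb 1 (\<lambda>q. N q $ i $ l * dpart (bu, 0) (Lk l) q)" for l
    proof -
      have "symb (1 - iota (bu, 0)) (dpart (bu, 0) (Lk l))"
        using symb_D[OF symb_Lk] U b by blast
      then have "symb 1 (dpart (bu, 0) (Lk l))" using iota_U[OF \<open>bu \<in> Basis\<close>] by simp
      then show ?thesis by (rule symb_mult'[OF symb_N]) simp
    qed
    show ?thesis unfolding e2 using iota_U[OF \<open>bu \<in> Basis\<close>] cX U
      by (simp add: iota_X symb_uminus symb_sum s)
  next
    case (X j)
    have e2: "HH b c = (\<lambda>q. N q $ i $ j)"
      unfolding e by (rule ext) (simp add: X A_zero matrix_vector_mult_basis column_def)
    show ?thesis unfolding e2 using X cX by (simp add: iota_X symb_N)
  qed
qed

lemma jbr_lam_compare: "jbr (lam a p) powr m \<le> Kc powr \<bar>m\<bar> * jbr (snd p) powr m"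
proof -
  obtain u \<eta> where p: "p = (u, \<eta>)" by (cases p)
  show ?thesis unfolding p
    by (rule powr_compare) (simp_all add: jbr_pos Kc_pos lam_upper lam_lower)
qed

lemma symb_comp_Phi:
  assumes "symb m G"
  shows "symb m (\<lambda>p. G (Phi p))"
proof -
  let ?P = "\<lambda>m h. \<exists>G. symb m G \<and> h = (\<lambda>p. G (Phi p))"
  show ?thesis
  proof (rule symb_coinduct[of ?P])
    show "?P m (\<lambda>p. G (Phi p))" using assms by blast
  next
    fix m and h :: "'n pt \<Rightarrow> real" assume "?P m h"
    then obtain G where G: "symb m G" and h: "h = (\<lambda>p. G (Phi p))" by blast
    note D = symb_D[OF G]
    have "\<forall>p. h differentiable (at p)"
    proof
      fix p
      have "G differentiable (at (Phi p))" using D by blast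
      then show "h differentiable (at p)"
        unfolding h using differentiable_chain_at[OF Phi_differentiable] by (simp add: o_def)
    qed
    moreover have "\<exists>C. \<forall>p. \<bar>h p\<bar> \<le> C * jbr (snd p) powr m"
    proof -
      obtain C where C: "\<forall>q. \<bar>G q\<bar> \<le> C * jbr (snd q) powr m" using D by blast
      have "\<bar>h p\<bar> \<le> (\<bar>C\<bar> * Kc powr \<bar>m\<bar>) * jbr (snd p) powr m" for p
      proof -
        have "\<bar>h p\<bar> \<le> C * jbr (lam a p) powr m" using C[rule_format, of "Phi p"] by (simp add: h Phi_def)
        also have "\<dots> \<le> \<bar>C\<bar> * jbr (lam a p) powr m" by (intro mult_right_mono) auto
        also have "\<dots> \<le> \<bar>C\<bar> * (Kc powr \<bar>m\<bar> * jbr (snd p) powr m)"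
          by (intro mult_left_mono jbr_lam_compare) auto
        finally show ?thesis by (simp add: mult.assoc)
      qed
      then show ?thesis by blast
    qed
    moreover have "\<forall>b\<in>Basis. ?P (m - iota b) (dpart b h)"
    proof
      fix b :: "'n pt" assume b: "b \<in> Basis"
      define Gn where "Gn q = (\<Sum>c\<in>Basis. HH b c q * dpart c G q)" for q
      have "dpart b h = (\<lambda>p. Gn (Phi p))"
      proof (rule ext)
        fix p
        show "dpart b h p = Gn (Phi p)"
          unfolding h Gn_def HH_def using dpart_comp_Phi[of G b p] D by simp
      qed
      moreover have "symb (m - iota b) Gn"
        unfolding Gn_def
      proof (rule symb_sum)
        fix c :: "'n pt" assume c: "c \<in> Basis"
        have "symb (m - iota c) (dpart c G)" using D c by blast
        then show "symb (m - iota b) (\<lambda>q. HH b c q * dpart c G q)"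
          by (rule symb_mult'[OF symb_HH[OF b c]]) simp
      qed simp
      ultimately show "?P (m - iota b) (dpart b h)" by blast
    qed
    ultimately show "(\<forall>p. h differentiable (at p)) \<and> (\<exists>C. \<forall>p. \<bar>h p\<bar> \<le> C * jbr (snd p) powr m) \<and> (\<forall>b\<in>Basis. ?P (m - iota b) (dpart b h))"
      by blast
  qed
qed

lemma symb_lam: "symb 1 (\<lambda>p. lam a p $ k)"
proof -
  have "symb 1 (\<lambda>p. snd (Phi p) $ k)" by (rule symb_comp_Phi[OF symb_coord])
  then show ?thesis by (simp add: Phi_def)
qed

lemma dxi_lam: "dxi j (\<lambda>q. lam a q $ i) p = N (Phi p) $ i $ j"
proof -
  have bl: "bounded_linear (\<lambda>v::'n pt. snd v $ i)"
    by (rule bounded_linear_compose[OF bounded_linear_vec_nth bounded_linear_snd])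
  have "((\<lambda>q. snd (Phi q) $ i) has_derivative (\<lambda>v. snd (G' (Phi p) v) $ i)) (at p)"
    using has_derivative_compose[OF Phi_deriv bounded_linear_imp_has_derivative[OF bl]] .
  then have "dpart ((0, 0), axis j 1) (\<lambda>q. snd (Phi q) $ i) p = snd (G' (Phi p) ((0, 0), axis j 1)) $ i"
    by (rule dpart_has_derivative)
  also have "\<dots> = N (Phi p) $ i $ j"
    using A_zero[of "Phi p"] by (simp add: G'_def zero_prod_def[symmetric] matrix_vector_mult_basis column_def)
  finally show ?thesis by (simp add: dxi_def Phi_def)
qed

lemma jac_eq: "jac_lam a p = inverse (det (J (Phi p)))"
proof -
  have "(\<chi> i j. dxi j (\<lambda>q. lam a q $ i) p) = N (Phi p)"
    by (simp add: vec_eq_iff dxi_lam)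
  then show ?thesis by (simp add: jac_lam_def detN_eq)
qed

lemma symb_jac: "symb 0 (jac_lam a)"
proof -
  have "symb 0 (\<lambda>p. inverse (det (J (Phi p))))" by (rule symb_comp_Phi[OF symb_invdetJ])
  moreover have "jac_lam a = (\<lambda>p. inverse (det (J (Phi p))))" by (rule ext) (rule jac_eq)
  ultimately show ?thesis by simp
qed

end



theorem lemma1p5:
  fixes a :: "('n::finite) pt \<Rightarrow> real" and \<delta> :: real
  assumes smooth: "smooth_fun a"
    and dy_symb: "\<And>j. symb 1 (dy j a)"
    and delta: "0 \<le> \<delta>" "\<delta> < 1"
    and hess: "\<And>p. onorm (\<lambda>v. hess_xi_y a p *v v) \<le> \<delta>"
  shows "(\<forall>k. symb 1 (\<lambda>p. Lam a p $ k))
    \<and> (\<forall>u. smooth_diffeo (\<lambda>xi. Lam a (u, xi)))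
    \<and> (\<exists>C>0. \<forall>u xi. inverse C * jbr xi \<le> jbr (Lam a (u, xi)) \<and> jbr (Lam a (u, xi)) \<le> C * jbr xi
                     \<and> inverse C * jbr xi \<le> jbr (lam a (u, xi)) \<and> jbr (lam a (u, xi)) \<le> C * jbr xi)
    \<and> (\<forall>k. symb 1 (\<lambda>p. lam a p $ k))
    \<and> symb 0 (jac_lam a)"
proof -
  interpret L: L15 a \<delta>
    by unfold_locales (use dy_symb delta hess in auto)
  have c1: "symb 1 (\<lambda>p. Lam a p $ k)" for k
  proof -
    have "L.Lk k = (\<lambda>p. Lam a p $ k)" by (rule ext) (simp add: L.Lk_def)
    then show ?thesis using L.symb_Lk[of k] by simp
  qed
  have c4: "symb 1 (\<lambda>p. lam a p $ k)" for k by (rule L.symb_lam)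
  have c2: "smooth_diffeo (\<lambda>xi. Lam a (u, xi))" for u
    unfolding smooth_diffeo_def smooth_map_def
  proof (intro conjI allI)
    show "bij (\<lambda>xi. Lam a (u, xi))" by (rule L.Lam_bij)
  next
    fix k
    have "smooth_fun (\<lambda>p. Lam a p $ k)" using c1[of k] unfolding symb_def by blast
    then show "smooth_fun (\<lambda>v. Lam a (u, v) $ k)" by (rule smooth_slice)
  next
    fix k
    have "smooth_fun (\<lambda>p. lam a p $ k)" using c4[of k] unfolding symb_def by blast
    then have "smooth_fun (\<lambda>v. lam a (u, v) $ k)" by (rule smooth_slice)
    then show "smooth_fun (\<lambda>v. inv (\<lambda>xi. Lam a (u, xi)) v $ k)" by (simp add: L.lam_slice)
  qed
  have c3: "\<exists>C>0. \<forall>u xi. inverse C * jbr xi \<le> jbr (Lam a (u, xi)) \<and> jbr (Lam a (u, xi)) \<le> C * jbr xi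
                     \<and> inverse C * jbr xi \<le> jbr (lam a (u, xi)) \<and> jbr (lam a (u, xi)) \<le> C * jbr xi"
  proof (intro exI[of _ L.Kc] conjI allI L.Kc_pos)
    fix u xi
    have K: "0 < L.Kc" by (rule L.Kc_pos)
    show "inverse L.Kc * jbr xi \<le> jbr (Lam a (u, xi))"
      using L.Lam_lower[of xi u] K by (simp add: field_simps)
    show "jbr (Lam a (u, xi)) \<le> L.Kc * jbr xi" by (rule L.Lam_upper)
    show "inverse L.Kc * jbr xi \<le> jbr (lam a (u, xi))"
      using L.lam_lower[of xi u] K by (simp add: field_simps)
    show "jbr (lam a (u, xi)) \<le> L.Kc * jbr xi" by (rule L.lam_upper)
  qed
  show ?thesis using c1 c2 c3 c4 L.symb_jac by blast
qed


end
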